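(* Let $G=(V,E)$ be a simple undirected graph with $V=\{1,\dots,|V|\}$, and let $t$ be the size of a maximum cut of $G$. Let $k=2|E||V|^2$ and construct the $(2k+|E|)\times 2|V|$ SNP matrix $M$ as follows. The first $k$ rows ($M_0$) consist of $|V|$ blocks of $k/|V|$ rows each; every row of the $j$-th block ($1\le j\le |V|$) has $0$ in columns $2j-1$ and $2j$ and holes everywhere else. The next $k$ rows ($M_1$) are defined identically but with $1$ instead of $0$. The final $|E|$ rows ($M_G$) correspond to the edges: for an edge $\{i,j\}$ with $i<j$, the row has $0$ in columns $2i-1,2i$, has $1$ in columns $2j-1,2j$, and for every $c\notin\{i,j\}$ has $0$ in column $2c-1$ and $1$ in column $2c$. Then $M$ is ungapped and $$\mathrm{Ungapped\text{-}MEC}(M)=|E|(|V|-2)+2(|E|-t).$$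
   Context: An SNP matrix is a matrix with entries in $\{0,1,-\}$, `-' being a hole. For $X\in\{0,1,-\}^m$, $Y\in\{0,1\}^m$, $d(X,Y)$ counts positions where one is 0 and the other 1 (holes do not count). A matrix is feasible if there exist $H_1,H_2\in\{0,1\}^m$ such that every row $r$ satisfies $d(r,H_1)=0$ or $d(r,H_2)=0$. A flip changes a 0 entry to 1 or a 1 entry to 0 (never to or from a hole). A matrix is ungapped if in every row all holes occur at the start or end of the row. $\mathrm{Ungapped\text{-}MEC}(M)$ is the minimum number of flips needed to make $M$ feasible. *)

theory Defs
  imports Main "HOL-Library.Product_Lexorder"
begin

datatype snp = Zero | One | Hole

text \<open>A row is a list of entries; a matrix is a list of rows (all of length m).
  Haplotypes are 0/1 strings, represented as bool lists (True = 1).\<close>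

definition snp_dist :: "snp list \<Rightarrow> bool list \<Rightarrow> nat" where
  "snp_dist X Y = card {i. i < length X \<and> i < length Y \<and>
      ((X ! i = Zero \<and> Y ! i) \<or> (X ! i = One \<and> \<not> Y ! i))}"

definition feasible :: "nat \<Rightarrow> snp list list \<Rightarrow> bool" where
  "feasible m M \<longleftrightarrow> (\<exists>H1 H2. length H1 = m \<and> length H2 = m \<and>
      (\<forall>r \<in> set M. snp_dist r H1 = 0 \<or> snp_dist r H2 = 0))"

definition flip_variant :: "snp list list \<Rightarrow> snp list list \<Rightarrow> bool" where
  "flip_variant M M' \<longleftrightarrow> list_all2 (\<lambda>r r'. length r = length r' \<and>
      (\<forall>c < length r. (r ! c = Hole) = (r' ! c = Hole))) M M'"

definition num_flips :: "snp list list \<Rightarrow> snp list list \<Rightarrow> nat" where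
  "num_flips M M' = (\<Sum>(r, r') \<leftarrow> zip M M'. card {c. c < length r \<and> r ! c \<noteq> r' ! c})"

definition ungapped_MEC :: "nat \<Rightarrow> snp list list \<Rightarrow> nat" where
  "ungapped_MEC m M = (LEAST f. \<exists>M'. flip_variant M M' \<and> feasible m M' \<and> num_flips M M' = f)"

definition ungapped :: "snp list list \<Rightarrow> bool" where
  "ungapped M \<longleftrightarrow> (\<forall>r \<in> set M. \<exists>a mid b. r = replicate a Hole @ mid @ replicate b Hole
      \<and> Hole \<notin> set mid)"

definition simple_graph :: "nat \<Rightarrow> nat set set \<Rightarrow> bool" where
  "simple_graph n E \<longleftrightarrow> (\<forall>e \<in> E. \<exists>i j. e = {i, j} \<and> i \<noteq> j \<and> i \<in> {1..n} \<and> j \<in> {1..n})"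

definition cut_size :: "nat set set \<Rightarrow> nat set \<Rightarrow> nat" where
  "cut_size E S = card {e \<in> E. \<exists>i j. e = {i, j} \<and> i \<in> S \<and> j \<notin> S}"

definition max_cut :: "nat \<Rightarrow> nat set set \<Rightarrow> nat" where
  "max_cut n E = Max {cut_size E S | S. S \<subseteq> {1..n}}"

text \<open>Columns are numbered 1..2n; column c is stored at list index c-1.\<close>

definition block_row :: "nat \<Rightarrow> snp \<Rightarrow> nat \<Rightarrow> snp list" where
  "block_row n x j = map (\<lambda>c. if c = 2*j - 1 \<or> c = 2*j then x else Hole) [1..<2*n+1]"

definition block_part :: "nat \<Rightarrow> nat \<Rightarrow> snp \<Rightarrow> snp list list" where
  "block_part n k x = concat (map (\<lambda>j. replicate (k div n) (block_row n x j)) [1..<n+1])"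

definition edge_row :: "nat \<Rightarrow> nat \<Rightarrow> nat \<Rightarrow> snp list" where
  "edge_row n i j = map (\<lambda>c. let v = (c + 1) div 2 in
      if v = i then Zero else if v = j then One else if odd c then Zero else One) [1..<2*n+1]"

definition edge_list :: "nat set set \<Rightarrow> (nat \<times> nat) list" where
  "edge_list E = sorted_list_of_set {(i, j). i < j \<and> {i, j} \<in> E}"

definition reduction_matrix :: "nat \<Rightarrow> nat set set \<Rightarrow> snp list list" where
  "reduction_matrix n E = (let k = 2 * card E * n^2 in
      block_part n k Zero @ block_part n k One @ map (\<lambda>(i, j). edge_row n i j) (edge_list E))"

end

theory Submission
  imports Defs
begin

definition mm :: "snp \<Rightarrow> bool \<Rightarrow> bool" where "mm x b \<longleftrightarrow> (x = Zero \<and> b) \<or> (x = One \<and> \<not> b)"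
definition cnt :: "snp \<Rightarrow> bool \<Rightarrow> nat" where "cnt x b = (if mm x b then 1 else 0)"

lemma card_sum: "card {i. i < (N::nat) \<and> P i} = (\<Sum>i<N. if P i then 1 else 0)"
proof (induction N)
  case 0 then show ?case by simp
next
  case (Suc N)
  have e: "{i. i < Suc N \<and> P i} = (if P N then insert N {i. i < N \<and> P i} else {i. i < N \<and> P i})"
    by (auto simp: less_Suc_eq)
  show ?case using Suc by (simp add: e)
qed

lemma sum_pairs: "(\<Sum>i<2*(n::nat). f i) = (\<Sum>v<n. f (2*v) + f (2*v+1))"
  by (induction n) (auto simp: add.assoc)

lemma dist_sum:
  assumes "length X = 2*n" "length Y = 2*n"
  shows "snp_dist X Y = (\<Sum>v<n. cnt (X!(2*v)) (Y!(2*v)) + cnt (X!(2*v+1)) (Y!(2*v+1)))"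
proof -
  have "snp_dist X Y = card {i. i < 2*n \<and> mm (X!i) (Y!i)}"
    unfolding snp_dist_def mm_def using assms by simp
  also have "\<dots> = (\<Sum>i<2*n. cnt (X!i) (Y!i))" unfolding card_sum cnt_def ..
  finally show ?thesis by (simp add: sum_pairs)
qed

lemma block_nth0: "p < 2*n \<Longrightarrow> block_row n x j ! p = (if p+1 = 2*j-1 \<or> p+1 = 2*j then x else Hole)"
  unfolding block_row_def by (simp del: upt_Suc add: nth_upt)

lemma block_nth:
  assumes "1 \<le> j" "v < n"
  shows "block_row n x j ! (2*v) = (if v = j - 1 then x else Hole)"
    "block_row n x j ! Suc (2*v) = (if v = j - 1 then x else Hole)"
proof -
  have "(2*v+1 = 2*j-1 \<or> 2*v+1 = 2*j) = (v = j - 1)" using assms(1) by presburger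
  then show "block_row n x j ! (2*v) = (if v = j - 1 then x else Hole)"
    using assms(2) by (simp add: block_nth0)
  have "(Suc (2*v)+1 = 2*j-1 \<or> Suc (2*v)+1 = 2*j) = (v = j - 1)" using assms(1) by presburger
  then show "block_row n x j ! Suc (2*v) = (if v = j - 1 then x else Hole)"
    using assms(2) by (simp add: block_nth0)
qed

lemma edge_nth0: "p < 2*n \<Longrightarrow> edge_row n i j ! p = (let v = (p + 2) div 2 in
      if v = i then Zero else if v = j then One else if odd (p+1) then Zero else One)"
  unfolding edge_row_def by (simp del: upt_Suc add: nth_upt)

lemma edge_nth:
  assumes "v < n"
  shows "edge_row n i j ! (2*v) = (if v+1 = i then Zero else if v+1 = j then One else Zero)"
    "edge_row n i j ! Suc (2*v) = (if v+1 = i then Zero else One)"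
proof -
  have a: "(2*v+2) div 2 = v+1" "(Suc (2*v) + 2) div 2 = v + 1" by simp_all
  have b: "2*v < 2*n" "Suc (2*v) < 2*n" using assms by simp_all
  show "edge_row n i j ! (2*v) = (if v+1 = i then Zero else if v+1 = j then One else Zero)"
    by (simp add: edge_nth0[OF b(1)] a Let_def)
  show "edge_row n i j ! Suc (2*v) = (if v+1 = i then Zero else One)"
    by (simp add: edge_nth0[OF b(2)] a Let_def)
qed

lemma len_block[simp]: "length (block_row n x j) = 2*n" by (simp add: block_row_def)
lemma len_edge[simp]: "length (edge_row n i j) = 2*n" by (simp add: edge_row_def)

lemma cnt_Hole[simp]: "cnt Hole b = 0" by (simp add: cnt_def mm_def)
lemma cnt_simps[simp]: "cnt Zero b = (if b then 1 else 0)" "cnt One b = (if b then 0 else 1)"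
  by (auto simp: cnt_def mm_def)

lemma block_dist:
  assumes "1 \<le> j" "j \<le> n" "length H = 2*n"
  shows "snp_dist (block_row n x j) H = cnt x (H!(2*(j-1))) + cnt x (H!(2*(j-1)+1))"
proof -
  have "snp_dist (block_row n x j) H = (\<Sum>v<n. if v = j - 1 then cnt x (H!(2*v)) + cnt x (H!(2*v+1)) else 0)"
    unfolding dist_sum[OF len_block assms(3)] using assms by (intro sum.cong) (auto simp: block_nth)
  also have "\<dots> = cnt x (H!(2*(j-1))) + cnt x (H!(2*(j-1)+1))"
    using assms by (subst sum.delta) auto
  finally show ?thesis .
qed

lemma edge_dist:
  assumes "1 \<le> i" "i < j" "j \<le> n" "length H = 2*n"
    and g: "\<And>v. v < n \<Longrightarrow> H!(2*v) = g v \<and> H!(2*v+1) = g v"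
  shows "snp_dist (edge_row n i j) H + 2 = n + (if g (i-1) then 2 else 0) + (if g (j-1) then 0 else 2)"
proof -
  have e: "cnt (edge_row n i j ! (2*v)) (H!(2*v)) + cnt (edge_row n i j ! (2*v+1)) (H!(2*v+1))
     + (if v = i - 1 then 1 else 0) + (if v = j - 1 then 1 else 0)
     = 1 + (if v = i - 1 then (if g (i-1) then 2 else 0) else 0) + (if v = j - 1 then (if g (j-1) then 0 else 2) else 0)"
    if "v < n" for v
  proof -
    have h: "H!(2*v) = g v" "H!Suc(2*v) = g v" using g[OF that] by auto
    show ?thesis
    proof (cases "v = i - 1")
      case True
      then have "i = v + 1" "v \<noteq> j - 1" "v + 1 \<noteq> j" using assms by auto
      then show ?thesis using that by (simp add: edge_nth h)
    next
      case False
      then have "v + 1 \<noteq> i" using assms by auto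
      show ?thesis
      proof (cases "v = j - 1")
        case True
        then have "j = v + 1" using assms by auto
        then show ?thesis using that False \<open>v + 1 \<noteq> i\<close> by (simp add: edge_nth h)
      next
        case F2: False
        then have "v + 1 \<noteq> j" using assms by auto
        then show ?thesis using that False F2 \<open>v + 1 \<noteq> i\<close> by (simp add: edge_nth h)
      qed
    qed
  qed
  have "snp_dist (edge_row n i j) H + 2 = (\<Sum>v<n. cnt (edge_row n i j ! (2*v)) (H!(2*v)) + cnt (edge_row n i j ! (2*v+1)) (H!(2*v+1))
     + (if v = i - 1 then 1 else 0) + (if v = j - 1 then 1 else 0))"
  proof -
    have "i - 1 < n" "j - 1 < n" using assms by linarith+
    then show ?thesis using assms by (simp add: dist_sum sum.distrib sum.delta)
  qed
  also have "\<dots> = (\<Sum>v<n. 1 + (if v = i - 1 then (if g (i-1) then 2 else 0) else 0) + (if v = j - 1 then (if g (j-1) then 0 else 2) else 0))"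
    using e by (intro sum.cong) auto
  also have "\<dots> = n + (if g (i-1) then 2 else 0) + (if g (j-1) then 0 else 2)"
  proof -
    have "i - 1 < n" "j - 1 < n" using assms by linarith+
    then show ?thesis by (simp only: sum.distrib) (simp add: sum.delta)
  qed
  finally show ?thesis .
qed

definition fixrow :: "snp list \<Rightarrow> bool list \<Rightarrow> snp list" where
  "fixrow r H = map (\<lambda>p. if r!p = Hole then Hole else if H!p then One else Zero) [0..<length r]"

lemma fixrow_len[simp]: "length (fixrow r H) = length r" by (simp add: fixrow_def)

lemma fixrow_dist: "snp_dist (fixrow r H) H = 0"
  unfolding snp_dist_def fixrow_def by auto

lemma fixrow_flips: assumes "length H = length r" shows "card {c. c < length r \<and> r ! c \<noteq> fixrow r H ! c} = snp_dist r H"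
proof -
  have "\<And>c. c < length r \<Longrightarrow> (r ! c \<noteq> fixrow r H ! c) = ((r!c = Zero \<and> H!c) \<or> (r!c = One \<and> \<not>H!c))"
    subgoal for c by (cases "r!c") (auto simp: fixrow_def)
    done
  then show ?thesis unfolding snp_dist_def using assms by (intro arg_cong[where f=card]) auto
qed

lemma num_flips_Nil[simp]: "num_flips [] [] = 0" by (simp add: num_flips_def)
lemma num_flips_Cons[simp]: "num_flips (r # M) (r' # M') = card {c. c < length r \<and> r ! c \<noteq> r' ! c} + num_flips M M'"
  by (simp add: num_flips_def)

lemma row_lower:
  assumes "length r = length r'" "\<forall>c < length r. (r ! c = Hole) = (r' ! c = Hole)"
    "snp_dist r' H = 0"
  shows "snp_dist r H \<le> card {c. c < length r \<and> r ! c \<noteq> r' ! c}"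
proof -
  have fin: "finite {i. i < length r' \<and> i < length H \<and>
      ((r' ! i = Zero \<and> H ! i) \<or> (r' ! i = One \<and> \<not> H ! i))}" by simp
  with assms(3) have emp: "{i. i < length r' \<and> i < length H \<and>
      ((r' ! i = Zero \<and> H ! i) \<or> (r' ! i = One \<and> \<not> H ! i))} = {}"
    unfolding snp_dist_def by simp
  have "{i. i < length r \<and> i < length H \<and> ((r ! i = Zero \<and> H ! i) \<or> (r ! i = One \<and> \<not> H ! i))}
      \<subseteq> {c. c < length r \<and> r ! c \<noteq> r' ! c}"
  proof
    fix i assume i: "i \<in> {i. i < length r \<and> i < length H \<and> ((r ! i = Zero \<and> H ! i) \<or> (r ! i = One \<and> \<not> H ! i))}"
    then have "r' ! i \<noteq> Hole" using assms(2) by auto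
    moreover have "i \<notin> {i. i < length r' \<and> i < length H \<and>
      ((r' ! i = Zero \<and> H ! i) \<or> (r' ! i = One \<and> \<not> H ! i))}" using emp by simp
    moreover have "i < length r'" "i < length H" using i assms(1) by auto
    ultimately show "i \<in> {c. c < length r \<and> r ! c \<noteq> r' ! c}" using i by (cases "r' ! i") auto
  qed
  then show ?thesis unfolding snp_dist_def by (intro card_mono) auto
qed

definition cost :: "bool list \<Rightarrow> bool list \<Rightarrow> snp list \<Rightarrow> nat" where
  "cost H1 H2 r = min (snp_dist r H1) (snp_dist r H2)"

definition totc :: "bool list \<Rightarrow> bool list \<Rightarrow> snp list list \<Rightarrow> nat" where
  "totc H1 H2 M = sum_list (map (cost H1 H2) M)"

lemma total_lower:
  assumes "flip_variant M M'" "\<forall>r \<in> set M'. snp_dist r H1 = 0 \<or> snp_dist r H2 = 0"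
  shows "totc H1 H2 M \<le> num_flips M M'"
  using assms(1,2) unfolding flip_variant_def totc_def
proof (induction M M' rule: list_all2_induct)
  case Nil then show ?case by simp
next
  case (Cons r M r' M')
  have d: "snp_dist r' H1 = 0 \<or> snp_dist r' H2 = 0" using Cons.prems by simp
  have h: "length r = length r'" "\<forall>c < length r. (r ! c = Hole) = (r' ! c = Hole)"
    using Cons.hyps(1) by auto
  have "cost H1 H2 r \<le> card {c. c < length r \<and> r ! c \<noteq> r' ! c}"
  proof (cases "snp_dist r' H1 = 0")
    case True
    then have "snp_dist r H1 \<le> card {c. c < length r \<and> r ! c \<noteq> r' ! c}" by (rule row_lower[OF h])
    then show ?thesis unfolding cost_def by linarith
  next
    case False
    then have "snp_dist r' H2 = 0" using d by simp
    then have "snp_dist r H2 \<le> card {c. c < length r \<and> r ! c \<noteq> r' ! c}" by (rule row_lower[OF h])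
    then show ?thesis unfolding cost_def by linarith
  qed
  then show ?case using Cons by simp
qed

definition fixM :: "bool list \<Rightarrow> bool list \<Rightarrow> snp list list \<Rightarrow> snp list list" where
  "fixM H1 H2 M = map (\<lambda>r. if snp_dist r H1 \<le> snp_dist r H2 then fixrow r H1 else fixrow r H2) M"

lemma fixM_props:
  assumes "length H1 = m" "length H2 = m" "\<forall>r\<in>set M. length r = m"
  shows "flip_variant M (fixM H1 H2 M)" "feasible m (fixM H1 H2 M)"
    "num_flips M (fixM H1 H2 M) = totc H1 H2 M"
proof -
  show "flip_variant M (fixM H1 H2 M)"
    unfolding flip_variant_def fixM_def list_all2_conv_all_nth
    by (auto simp: fixrow_def)
  show "feasible m (fixM H1 H2 M)"
    unfolding feasible_def fixM_def using assms by (intro exI[of _ H1] exI[of _ H2]) (auto simp: fixrow_dist)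
  show "num_flips M (fixM H1 H2 M) = totc H1 H2 M"
    using assms(3) unfolding fixM_def totc_def
  proof (induction M)
    case Nil then show ?case by simp
  next
    case (Cons r M)
    then show ?case using assms(1,2) fixrow_flips[of H1 r] fixrow_flips[of H2 r] by (simp add: cost_def)
  qed
qed

lemma MEC_eq:
  assumes "length H1 = m" "length H2 = m" "\<forall>r\<in>set M. length r = m"
    and low: "\<And>G1 G2. length G1 = m \<Longrightarrow> length G2 = m \<Longrightarrow> totc H1 H2 M \<le> totc G1 G2 M"
  shows "ungapped_MEC m M = totc H1 H2 M"
  unfolding ungapped_MEC_def
proof (rule Least_equality)
  show "\<exists>M'. flip_variant M M' \<and> feasible m M' \<and> num_flips M M' = totc H1 H2 M"
    using fixM_props[OF assms(1-3)] by blast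
next
  fix f assume "\<exists>M'. flip_variant M M' \<and> feasible m M' \<and> num_flips M M' = f"
  then obtain M' G1 G2 where "flip_variant M M'" "length G1 = m" "length G2 = m"
    "\<forall>r \<in> set M'. snp_dist r G1 = 0 \<or> snp_dist r G2 = 0" "num_flips M M' = f"
    unfolding feasible_def by blast
  then have "totc H1 H2 M \<le> totc G1 G2 M" "totc G1 G2 M \<le> num_flips M M'"
    using low total_lower by auto
  then show "totc H1 H2 M \<le> f" using \<open>num_flips M M' = f\<close> by linarith
qed

lemma sum_list_concat_map: "sum_list (map f (concat xss)) = sum_list (map (\<lambda>xs. sum_list (map f xs)) xss)"
  by (induction xss) auto

lemma totc_append[simp]: "totc H1 H2 (A @ B) = totc H1 H2 A + totc H1 H2 B"
  by (simp add: totc_def)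

lemma block_part_set: "set (block_part n k x) \<subseteq> {block_row n x j | j. 1 \<le> j \<and> j \<le> n}"
  unfolding block_part_def by auto

lemma block_lower:
  assumes "1 \<le> j" "j \<le> n"
  shows "(k div n) * cost H1 H2 (block_row n x j) \<le> totc H1 H2 (block_part n k x)"
proof -
  have eq: "totc H1 H2 (block_part n k x) = sum_list (map (\<lambda>j. (k div n) * cost H1 H2 (block_row n x j)) [1..<n+1])"
    unfolding totc_def block_part_def sum_list_concat_map by (simp add: map_replicate sum_list_replicate comp_def)
  have mem: "(k div n) * cost H1 H2 (block_row n x j) \<in> set (map (\<lambda>j. (k div n) * cost H1 H2 (block_row n x j)) [1..<n+1])"
    unfolding set_map using assms by (intro imageI) (simp del: upt_Suc)
  show ?thesis unfolding eq by (rule member_le_sum_list[OF mem]) simp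
qed

lemma block_zero:
  assumes "\<And>r. r \<in> set (block_part n k x) \<Longrightarrow> cost H1 H2 r = 0"
  shows "totc H1 H2 (block_part n k x) = 0"
  using assms unfolding totc_def by simp

definition hap :: "nat \<Rightarrow> (nat \<Rightarrow> bool) \<Rightarrow> bool list" where
  "hap n g = map (\<lambda>p. g (p div 2)) [0..<2*n]"

lemma hap_len[simp]: "length (hap n g) = 2*n" by (simp add: hap_def)
lemma hap_nth: "v < n \<Longrightarrow> hap n g ! (2*v) = g v \<and> hap n g ! Suc (2*v) = g v"
  unfolding hap_def by (simp del: upt_Suc add: nth_upt)

lemma simple_graph_edge:
  assumes "simple_graph n E" "e \<in> E"
  obtains i j where "e = {i, j}" "i < j" "1 \<le> i" "j \<le> n"
proof -
  obtain a b where "e = {a, b}" "a \<noteq> b" "a \<in> {1..n}" "b \<in> {1..n}"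
    using assms unfolding simple_graph_def by blast
  then show ?thesis using that[of "min a b" "max a b"]
    by (cases "a < b") (auto simp: insert_commute min_def max_def)
qed

lemma simple_graph_finite: "simple_graph n E \<Longrightarrow> finite E"
proof -
  assume "simple_graph n E"
  then have "E \<subseteq> Pow {1..n}" unfolding simple_graph_def by auto
  then show "finite E" using finite_subset by blast
qed

definition Pset :: "nat set set \<Rightarrow> (nat \<times> nat) set" where
  "Pset E = {(i, j). i < j \<and> {i, j} \<in> E}"

lemma Pset_props:
  assumes "simple_graph n E" "p \<in> Pset E"
  shows "1 \<le> fst p" "fst p < snd p" "snd p \<le> n"
proof -
  obtain i j where p: "p = (i, j)" "i < j" "{i,j} \<in> E" using assms(2) unfolding Pset_def by auto
  then obtain a b where "{i,j} = {a, b}" "a < b" "1 \<le> a" "b \<le> n"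
    using simple_graph_edge[OF assms(1) p(3)] by metis
  then have "a = i" "b = j" using p(2) by (auto simp: doubleton_eq_iff)
  then show "1 \<le> fst p" "fst p < snd p" "snd p \<le> n" using p \<open>1 \<le> a\<close> \<open>b \<le> n\<close> by auto
qed

lemma Pset_finite: assumes "simple_graph n E" shows "finite (Pset E)"
proof -
  have "Pset E \<subseteq> {1..n} \<times> {1..n}" using Pset_props[OF assms] by fastforce
  then show ?thesis using finite_subset by blast
qed

lemma Pset_inj: "inj_on (\<lambda>(i, j). {i, j}) (Pset E)"
  unfolding Pset_def inj_on_def by (auto simp: doubleton_eq_iff)

lemma Pset_image: assumes "simple_graph n E" shows "(\<lambda>(i, j). {i, j}) ` Pset E = E"
proof
  show "(\<lambda>(i, j). {i, j}) ` Pset E \<subseteq> E" unfolding Pset_def by auto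
  show "E \<subseteq> (\<lambda>(i, j). {i, j}) ` Pset E"
  proof
    fix e assume "e \<in> E"
    then obtain i j where "e = {i, j}" "i < j" using simple_graph_edge[OF assms] by metis
    then show "e \<in> (\<lambda>(i, j). {i, j}) ` Pset E" using \<open>e \<in> E\<close> unfolding Pset_def by auto
  qed
qed

lemma card_Pset: "simple_graph n E \<Longrightarrow> card (Pset E) = card E"
  using card_image[OF Pset_inj] Pset_image by metis

lemma edge_list_eq: "simple_graph n E \<Longrightarrow> edge_list E = sorted_list_of_set (Pset E)"
  unfolding edge_list_def Pset_def by simp

lemma cut_image:
  assumes "simple_graph n E"
  shows "(\<lambda>(i, j). {i, j}) ` {p \<in> Pset E. g (fst p - 1) \<noteq> g (snd p - 1)} =
    {e \<in> E. \<exists>i j. e = {i, j} \<and> i \<in> {v \<in> {1..n}. g (v - 1)} \<and> j \<notin> {v \<in> {1..n}. g (v - 1)}}"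
    (is "?L = ?R")
proof
  show "?L \<subseteq> ?R"
  proof
    fix e assume "e \<in> ?L"
    then obtain q where q: "q \<in> Pset E" "g (fst q - 1) \<noteq> g (snd q - 1)" "e = (\<lambda>(i, j). {i, j}) q" by blast
    obtain i j where "q = (i, j)" by (cases q)
    then have p: "(i, j) \<in> Pset E" "g (i - 1) \<noteq> g (j - 1)" "e = {i, j}" using q by auto
    have r: "1 \<le> i" "i < j" "j \<le> n" using Pset_props[OF assms p(1)] by auto
    have "e \<in> E" using p(1,3) unfolding Pset_def by auto
    show "e \<in> ?R"
    proof (cases "g (i - 1)")
      case True
      then have "i \<in> {v \<in> {1..n}. g (v - 1)}" "j \<notin> {v \<in> {1..n}. g (v - 1)}" using p(2) r by auto
      then show ?thesis using \<open>e \<in> E\<close> p(3) by blast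
    next
      case False
      then have "j \<in> {v \<in> {1..n}. g (v - 1)}" "i \<notin> {v \<in> {1..n}. g (v - 1)}" using p(2) r by auto
      moreover have "e = {j, i}" using p(3) by auto
      ultimately show ?thesis using \<open>e \<in> E\<close> by blast
    qed
  qed
  show "?R \<subseteq> ?L"
  proof
    fix e assume "e \<in> ?R"
    then obtain a b where e: "e \<in> E" "e = {a, b}" "a \<in> {1..n}" "g (a - 1)" "b \<notin> {v \<in> {1..n}. g (v - 1)}" by auto
    obtain i j where ij: "e = {i, j}" "i < j" "1 \<le> i" "j \<le> n" using simple_graph_edge[OF assms e(1)] by metis
    have "b \<in> {1..n}" using e(2) ij by (auto simp: doubleton_eq_iff)
    then have nb: "\<not> g (b - 1)" using e(5) by auto
    have "(a = i \<and> b = j) \<or> (a = j \<and> b = i)" using e(2) ij(1) by (auto simp: doubleton_eq_iff)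
    moreover have "(i, j) \<in> Pset E" using e(1) ij unfolding Pset_def by auto
    ultimately show "e \<in> ?L" using e(4) nb ij(1) by (auto intro!: image_eqI[of _ _ "(i, j)"])
  qed
qed

lemma cut_card:
  assumes "simple_graph n E"
  shows "card {p \<in> Pset E. g (fst p - 1) \<noteq> g (snd p - 1)} = cut_size E {v \<in> {1..n}. g (v - 1)}"
proof -
  have "inj_on (\<lambda>(i, j). {i, j}) {p \<in> Pset E. g (fst p - 1) \<noteq> g (snd p - 1)}"
    using Pset_inj by (rule inj_on_subset) auto
  then have "card {p \<in> Pset E. g (fst p - 1) \<noteq> g (snd p - 1)} =
     card ((\<lambda>(i, j). {i, j}) ` {p \<in> Pset E. g (fst p - 1) \<noteq> g (snd p - 1)})"
    by (simp only: card_image)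
  also have "\<dots> = cut_size E {v \<in> {1..n}. g (v - 1)}"
    unfolding cut_size_def cut_image[OF assms] ..
  finally show ?thesis .
qed

lemma sum_if2: "finite P \<Longrightarrow> (\<Sum>p\<in>P. if Q p then 2 else 0) = 2 * card {p \<in> P. Q p}"
proof -
  assume f: "finite P"
  have "(\<Sum>p\<in>{p \<in> P. Q p}. 2) = (\<Sum>p\<in>P. if Q p then 2 else (0::nat))"
    by (rule sum.inter_filter[OF f])
  then show ?thesis by simp
qed

lemma edge_cost:
  assumes "1 \<le> i" "i < j" "j \<le> n" "length H1 = 2*n" "length H2 = 2*n"
    and h1: "\<And>v. v < n \<Longrightarrow> H1!(2*v) = g v \<and> H1!Suc(2*v) = g v"
    and h2: "\<And>v. v < n \<Longrightarrow> H2!(2*v) = (\<not> g v) \<and> H2!Suc(2*v) = (\<not> g v)"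
  shows "cost H1 H2 (edge_row n i j) + (if g (i-1) \<noteq> g (j-1) then 2 else 0) = n"
proof -
  have d1: "snp_dist (edge_row n i j) H1 + 2 = n + (if g (i-1) then 2 else 0) + (if g (j-1) then 0 else 2)"
    using assms(1-4) h1 by (intro edge_dist) auto
  have d2: "snp_dist (edge_row n i j) H2 + 2 = n + (if \<not> g (i-1) then 2 else 0) + (if \<not> g (j-1) then 0 else 2)"
    using assms(1-3,5) h2 by (intro edge_dist[where g="\<lambda>v. \<not> g v"]) auto
  show ?thesis using d1 d2 unfolding cost_def
    by (cases "g (i-1)"; cases "g (j-1)") auto
qed

lemma edge_sum:
  assumes sg: "simple_graph n E" and l: "length H1 = 2*n" "length H2 = 2*n"
    and h1: "\<And>v. v < n \<Longrightarrow> H1!(2*v) = g v \<and> H1!Suc(2*v) = g v"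
    and h2: "\<And>v. v < n \<Longrightarrow> H2!(2*v) = (\<not> g v) \<and> H2!Suc(2*v) = (\<not> g v)"
  shows "totc H1 H2 (map (\<lambda>(i, j). edge_row n i j) (edge_list E)) + 2 * cut_size E {v \<in> {1..n}. g (v - 1)}
    = n * card E"
proof -
  let ?f = "\<lambda>(i, j). cost H1 H2 (edge_row n i j)"
  let ?Q = "\<lambda>p. g (fst p - 1) \<noteq> g (snd p - 1)"
  have fin: "finite (Pset E)" by (rule Pset_finite[OF sg])
  have each: "?f p + (if ?Q p then 2 else 0) = n" if "p \<in> Pset E" for p
  proof -
    obtain i j where p: "p = (i, j)" by (cases p)
    have "1 \<le> i" "i < j" "j \<le> n" using Pset_props[OF sg that] p by auto
    then show ?thesis using edge_cost[OF _ _ _ l h1 h2] p by auto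
  qed
  have "totc H1 H2 (map (\<lambda>(i, j). edge_row n i j) (edge_list E)) = sum ?f (Pset E)"
  proof -
    have "totc H1 H2 (map (\<lambda>(i, j). edge_row n i j) (edge_list E)) = sum_list (map ?f (sorted_list_of_set (Pset E)))"
      unfolding totc_def edge_list_eq[OF sg] by (simp add: comp_def split_def)
    also have "\<dots> = sum ?f (set (sorted_list_of_set (Pset E)))"
      by (rule sum.distinct_set_conv_list[symmetric]) simp
    also have "\<dots> = sum ?f (Pset E)" using fin by simp
    finally show ?thesis .
  qed
  moreover have "sum ?f (Pset E) + 2 * card {p \<in> Pset E. ?Q p} = n * card E"
  proof -
    have "sum ?f (Pset E) + 2 * card {p \<in> Pset E. ?Q p} = sum ?f (Pset E) + (\<Sum>p\<in>Pset E. if ?Q p then 2 else 0)"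
      using sum_if2[OF fin] by simp
    also have "\<dots> = (\<Sum>p\<in>Pset E. ?f p + (if ?Q p then 2 else 0))" by (simp add: sum.distrib)
    also have "\<dots> = (\<Sum>p\<in>Pset E. n)" using each by (intro sum.cong) auto
    also have "\<dots> = n * card E" using card_Pset[OF sg] by simp
    finally show ?thesis .
  qed
  ultimately show ?thesis using cut_card[OF sg, of g] by simp
qed

lemma hap_block_cost:
  assumes "v < n" "x = Zero \<or> x = One"
  shows "cost (hap n g) (hap n (\<lambda>v. \<not> g v)) (block_row n x (v+1)) = 0"
proof -
  have "snp_dist (block_row n x (v+1)) (hap n g) = cnt x (hap n g!(2*v)) + cnt x (hap n g!Suc(2*v))"
       "snp_dist (block_row n x (v+1)) (hap n (\<lambda>v. \<not> g v)) = cnt x (hap n (\<lambda>v. \<not> g v)!(2*v)) + cnt x (hap n (\<lambda>v. \<not> g v)!Suc(2*v))"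
    using assms(1) by (simp_all add: block_dist)
  moreover have a: "hap n g ! (2*v) = g v" "hap n g ! Suc (2*v) = g v"
     "hap n (\<lambda>v. \<not> g v) ! (2*v) = (\<not> g v)" "hap n (\<lambda>v. \<not> g v) ! Suc (2*v) = (\<not> g v)"
    using hap_nth[OF assms(1), of g] hap_nth[OF assms(1), of "\<lambda>v. \<not> g v"] by simp_all
  ultimately show ?thesis unfolding cost_def using assms(2)
    by (cases "g v") auto
qed

lemma compl_or_block:
  assumes "v < n" "length H1 = 2*n" "length H2 = 2*n"
    and "cost H1 H2 (block_row n Zero (v+1)) = 0" "cost H1 H2 (block_row n One (v+1)) = 0"
  shows "(H1!(2*v) = H1!Suc(2*v) \<and> H2!(2*v) = H2!Suc(2*v) \<and> H2!(2*v) = (\<not> H1!(2*v)))"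
proof -
  have "snp_dist (block_row n Zero (v+1)) H1 = cnt Zero (H1!(2*v)) + cnt Zero (H1!Suc(2*v))"
       "snp_dist (block_row n Zero (v+1)) H2 = cnt Zero (H2!(2*v)) + cnt Zero (H2!Suc(2*v))"
       "snp_dist (block_row n One (v+1)) H1 = cnt One (H1!(2*v)) + cnt One (H1!Suc(2*v))"
       "snp_dist (block_row n One (v+1)) H2 = cnt One (H2!(2*v)) + cnt One (H2!Suc(2*v))"
    using assms(1-3) by (simp_all add: block_dist)
  then show ?thesis using assms(4,5) unfolding cost_def
    by (cases "H1!(2*v)"; cases "H1!Suc(2*v)"; cases "H2!(2*v)"; cases "H2!Suc(2*v)") (auto simp: min_def)
qed

lemma maxcut_set: "{cut_size E S | S. S \<subseteq> {1..n}} = cut_size E ` Pow {1..n}" by auto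

lemma maxcut_ge: "S \<subseteq> {1..n} \<Longrightarrow> cut_size E S \<le> max_cut n E"
  unfolding max_cut_def maxcut_set by (rule Max_ge) auto

lemma maxcut_in: "\<exists>S. S \<subseteq> {1..n} \<and> cut_size E S = max_cut n E"
proof -
  have "max_cut n E \<in> cut_size E ` Pow {1..n}"
    unfolding max_cut_def maxcut_set by (rule Max_in) auto
  then show ?thesis by auto
qed

lemma block_row_ungapped':
  assumes that: "Suc j \<le> n"
  shows "block_row n x (Suc j) = replicate (2*j) Hole @ [x, x] @ replicate (2*(n - Suc j)) Hole"
proof (rule nth_equalityI)
  show "length (block_row n x (Suc j)) = length (replicate (2*j) Hole @ [x, x] @ replicate (2*(n - Suc j)) Hole)"
    using that by simp
next
  fix p assume "p < length (block_row n x (Suc j))"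
  then have p: "p < 2*n" by simp
  have b: "block_row n x (Suc j) ! p = (if p = 2*j \<or> p = Suc (2*j) then x else Hole)"
    using block_nth0[OF p, of x "Suc j"] by auto
  show "block_row n x (Suc j) ! p = (replicate (2*j) Hole @ [x, x] @ replicate (2*(n - Suc j)) Hole) ! p"
  proof (cases "p < 2*j")
    case True
    then show ?thesis using b by (simp add: nth_append)
  next
    case False
    define d where "d = p - 2*j"
    have dl: "d < 2 + 2*(n - Suc j)" using p False that unfolding d_def by linarith
    have pd: "p = length (replicate (2*j) Hole) + d" using False unfolding d_def by simp
    have "(replicate (2*j) Hole @ [x, x] @ replicate (2*(n - Suc j)) Hole) ! p = ([x, x] @ replicate (2*(n - Suc j)) Hole) ! d"
      unfolding pd by (rule nth_append_length_plus)
    also have "\<dots> = (if d = 0 \<or> d = 1 then x else Hole)"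
      using dl by (cases d; cases "d - 1") (auto simp: nth_Cons')
    also have "\<dots> = block_row n x (Suc j) ! p" unfolding b d_def using False by auto
    finally show ?thesis by simp
  qed
qed

lemma block_row_ungapped:
  assumes "1 \<le> j" "j \<le> n"
  shows "block_row n x j = replicate (2*(j-1)) Hole @ [x, x] @ replicate (2*(n-j)) Hole"
  using block_row_ungapped'[of "j - 1" n x] assms by simp

lemma matrix_ungapped:
  assumes "simple_graph n E"
  shows "ungapped (reduction_matrix n E)"
  unfolding ungapped_def
proof
  fix r assume r: "r \<in> set (reduction_matrix n E)"
  show "\<exists>a mid b. r = replicate a Hole @ mid @ replicate b Hole \<and> Hole \<notin> set mid"
  proof (cases "\<exists>x j. (x = Zero \<or> x = One) \<and> 1 \<le> j \<and> j \<le> n \<and> r = block_row n x j")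
    case True
    then obtain x j where "x = Zero \<or> x = One" "1 \<le> j" "j \<le> n" "r = block_row n x j" by blast
    then show ?thesis using block_row_ungapped[of j n x] by (intro exI[of _ "2*(j-1)"] exI[of _ "[x,x]"] exI[of _ "2*(n-j)"]) auto
  next
    case False
    let ?k = "2 * card E * n^2"
    have "r \<in> set (block_part n ?k Zero) \<or> r \<in> set (block_part n ?k One) \<or>
        r \<in> set (map (\<lambda>(i, j). edge_row n i j) (edge_list E))"
      using r unfolding reduction_matrix_def Let_def by auto
    moreover have "r \<notin> set (block_part n ?k Zero)"
    proof
      assume "r \<in> set (block_part n ?k Zero)"
      then have "r \<in> {block_row n Zero j | j. 1 \<le> j \<and> j \<le> n}" using block_part_set by blast
      then show False using False by blast
    qed
    moreover have "r \<notin> set (block_part n ?k One)"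
    proof
      assume "r \<in> set (block_part n ?k One)"
      then have "r \<in> {block_row n One j | j. 1 \<le> j \<and> j \<le> n}" using block_part_set by blast
      then show False using False by blast
    qed
    ultimately have "r \<in> set (map (\<lambda>(i, j). edge_row n i j) (edge_list E))" by blast
    then obtain i j where "r = edge_row n i j" by auto
    moreover have "Hole \<notin> set (edge_row n i j)" unfolding edge_row_def by (auto simp: Let_def)
    ultimately show ?thesis by (intro exI[of _ 0] exI[of _ r]) auto
  qed
qed

lemma rows_len:
  "\<forall>r \<in> set (reduction_matrix n E). length r = 2*n"
proof
  fix r assume r: "r \<in> set (reduction_matrix n E)"
  let ?k = "2 * card E * n^2"
  have "r \<in> set (block_part n ?k Zero) \<or> r \<in> set (block_part n ?k One) \<or>
      r \<in> set (map (\<lambda>(i, j). edge_row n i j) (edge_list E))"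
    using r unfolding reduction_matrix_def Let_def by auto
  then show "length r = 2*n" using block_part_set[of n ?k Zero] block_part_set[of n ?k One] by auto
qed

lemma totc_split: "totc H1 H2 (reduction_matrix n E) =
   totc H1 H2 (block_part n (2 * card E * n^2) Zero) + totc H1 H2 (block_part n (2 * card E * n^2) One)
   + totc H1 H2 (map (\<lambda>(i, j). edge_row n i j) (edge_list E))"
  unfolding reduction_matrix_def Let_def by simp

lemma lower_all:
  assumes sg: "simple_graph n E" and l: "length G1 = 2*n" "length G2 = 2*n"
  shows "n * card E \<le> totc G1 G2 (reduction_matrix n E) + 2 * max_cut n E"
proof (cases "\<forall>v<n. G1!(2*v) = G1!Suc(2*v) \<and> G2!(2*v) = G2!Suc(2*v) \<and> G2!(2*v) = (\<not> G1!(2*v))")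
  case True
  let ?g = "\<lambda>v. G1!(2*v)"
  have h1: "\<And>v. v < n \<Longrightarrow> G1!(2*v) = ?g v \<and> G1!Suc(2*v) = ?g v" using True by auto
  have h2: "\<And>v. v < n \<Longrightarrow> G2!(2*v) = (\<not> ?g v) \<and> G2!Suc(2*v) = (\<not> ?g v)" using True by auto
  have e: "totc G1 G2 (map (\<lambda>(i, j). edge_row n i j) (edge_list E)) + 2 * cut_size E {v \<in> {1..n}. ?g (v - 1)} = n * card E"
    by (rule edge_sum[OF sg l h1 h2])
  have "cut_size E {v \<in> {1..n}. ?g (v - 1)} \<le> max_cut n E" by (rule maxcut_ge) auto
  then show ?thesis using e totc_split[of G1 G2 n E] by linarith
next
  case False
  then obtain v where v: "v < n" and nc: "\<not> (G1!(2*v) = G1!Suc(2*v) \<and> G2!(2*v) = G2!Suc(2*v) \<and> G2!(2*v) = (\<not> G1!(2*v)))"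
    by blast
  have "cost G1 G2 (block_row n Zero (v+1)) \<noteq> 0 \<or> cost G1 G2 (block_row n One (v+1)) \<noteq> 0"
    using compl_or_block[OF v l] nc by blast
  then obtain x where x: "cost G1 G2 (block_row n x (v+1)) \<ge> 1" "x = Zero \<or> x = One"
    by (metis One_nat_def less_one not_le)
  have kd: "2 * card E * n^2 div n = 2 * card E * n" using v by (simp add: power2_eq_square)
  have "(2 * card E * n^2 div n) * cost G1 G2 (block_row n x (v+1)) \<le> totc G1 G2 (block_part n (2 * card E * n^2) x)"
    by (rule block_lower) (use v in auto)
  moreover have "2 * card E * n \<le> (2 * card E * n^2 div n) * cost G1 G2 (block_row n x (v+1))"
    unfolding kd using x(1) by simp
  moreover have "totc G1 G2 (block_part n (2 * card E * n^2) x) \<le> totc G1 G2 (reduction_matrix n E)"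
    using x(2) totc_split[of G1 G2 n E] by auto
  ultimately have "2 * card E * n \<le> totc G1 G2 (reduction_matrix n E)" by linarith
  moreover have "n * card E \<le> 2 * card E * n" by simp
  ultimately show ?thesis by linarith
qed

lemma upper_ex:
  assumes sg: "simple_graph n E" and that: "S \<subseteq> {1..n}"
  shows "totc (hap n (\<lambda>v. v + 1 \<in> S)) (hap n (\<lambda>v. \<not> v + 1 \<in> S)) (reduction_matrix n E) + 2 * cut_size E S = n * card E"
proof -
  let ?g = "\<lambda>v. v + 1 \<in> S"
  let ?H1 = "hap n ?g" and ?H2 = "hap n (\<lambda>v. \<not> ?g v)"
  have h1: "\<And>v. v < n \<Longrightarrow> ?H1!(2*v) = ?g v \<and> ?H1!Suc(2*v) = ?g v" by (rule hap_nth)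
  have h2: "\<And>v. v < n \<Longrightarrow> ?H2!(2*v) = (\<not> ?g v) \<and> ?H2!Suc(2*v) = (\<not> ?g v)" by (rule hap_nth)
  have S: "{v \<in> {1..n}. ?g (v - 1)} = S" using that by auto
  have e: "totc ?H1 ?H2 (map (\<lambda>(i, j). edge_row n i j) (edge_list E)) + 2 * cut_size E S = n * card E"
    using edge_sum[OF sg hap_len hap_len h1 h2] unfolding S .
  have z: "totc ?H1 ?H2 (block_part n k x) = 0" if "x = Zero \<or> x = One" for k x
  proof (rule block_zero)
    fix r assume "r \<in> set (block_part n k x)"
    then obtain j where "r = block_row n x j" "1 \<le> j" "j \<le> n" using block_part_set by blast
    then show "cost ?H1 ?H2 r = 0" using hap_block_cost[of "j - 1" n x ?g] that by simp
  qed
  show ?thesis using e z totc_split[of ?H1 ?H2 n E] by simp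
qed

theorem mainTheorem2:
  fixes n :: nat and E :: "nat set set"
  assumes "simple_graph n E"
  shows "ungapped (reduction_matrix n E) \<and>
    int (ungapped_MEC (2 * n) (reduction_matrix n E)) =
      int (card E) * (int n - 2) + 2 * (int (card E) - int (max_cut n E))"
proof
  show "ungapped (reduction_matrix n E)" by (rule matrix_ungapped[OF assms])
  obtain S where S: "S \<subseteq> {1..n}" "cut_size E S = max_cut n E" using maxcut_in by blast
  let ?H1 = "hap n (\<lambda>v. v + 1 \<in> S)" and ?H2 = "hap n (\<lambda>v. \<not> v + 1 \<in> S)"
  have up: "totc ?H1 ?H2 (reduction_matrix n E) + 2 * max_cut n E = n * card E"
    using upper_ex[OF assms S(1)] S(2) by simp
  have "ungapped_MEC (2 * n) (reduction_matrix n E) = totc ?H1 ?H2 (reduction_matrix n E)"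
  proof (rule MEC_eq)
    show "length ?H1 = 2 * n" "length ?H2 = 2 * n" by simp_all
    show "\<forall>r\<in>set (reduction_matrix n E). length r = 2 * n" by (rule rows_len)
    fix G1 G2 :: "bool list" assume "length G1 = 2 * n" "length G2 = 2 * n"
    then have "n * card E \<le> totc G1 G2 (reduction_matrix n E) + 2 * max_cut n E"
      using lower_all[OF assms] by blast
    then show "totc ?H1 ?H2 (reduction_matrix n E) \<le> totc G1 G2 (reduction_matrix n E)"
      using up by linarith
  qed
  then have "int (ungapped_MEC (2 * n) (reduction_matrix n E)) + 2 * int (max_cut n E) = int n * int (card E)"
    using up by (metis of_nat_add of_nat_mult of_nat_numeral)
  then show "int (ungapped_MEC (2 * n) (reduction_matrix n E)) =
      int (card E) * (int n - 2) + 2 * (int (card E) - int (max_cut n E))"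
    by (simp add: algebra_simps)
qed

end
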